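(* Let $g\in\mathcal{S}'(\mathbb{R})$ be supported in $[0,\infty)$ and let $a,b$ be constants. Suppose that, as $\lambda\to\infty$, $$g(\lambda x)=a\frac{\delta(x)}{\lambda}+b\frac{\log\lambda}{\lambda}\delta(x)+\frac{b}{\lambda}\operatorname{Pf}\left(\frac{H(x)}{x}\right)+o\left(\frac{1}{\lambda}\right)\quad\text{in }\mathcal{S}'(\mathbb{R}).$$ Then $$\mathcal{L}\{g;y\}=a-b\gamma+b\log\left(\frac{1}{y}\right)+o(1),\qquad y\to 0^+,$$ where $\gamma$ is Euler's constant.
   Context: $\delta$ is the Dirac delta and $H$ the Heaviside function (characteristic function of $[0,\infty)$). The distribution $\operatorname{Pf}(H(x)/x)$ is defined by $\langle \operatorname{Pf}(H(x)/x),\phi\rangle=\int_0^1\frac{\phi(x)-\phi(0)}{x}\,dx+\int_1^\infty\frac{\phi(x)}{x}\,dx$. For a distribution $g$, $g(\lambda x)$ is the distribution $\phi\mapsto \lambda^{-1}\langle g(x),\phi(x/\lambda)\rangle$. An asymptotic relation "$g(\lambda x)=c_1(\lambda)g_1(x)+c_2(\lambda)g_2(x)+o(c_2(\lambda))$ in $\mathcal{S}'(\mathbb{R})$" means that for every $\phi\in\mathcal{S}(\mathbb{R})$, $\langle g(\lambda x),\phi(x)\rangle=c_1(\lambda)\langle g_1,\phi\rangle+c_2(\lambda)\langle g_2,\phi\rangle+o(c_2(\lambda))$. For $g\in\mathcal{S}'(\mathbb{R})$ supported in $[0,\infty)$, its Laplace transform is $\mathcal{L}\{g;y\}=\langle g(x),e^{-yx}\rangle$,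 $y>0$ (well defined since $g$ is supported in $[0,\infty)$). *)

theory Defs
  imports "HOL-Analysis.Analysis"
begin

fun nderiv :: "nat \<Rightarrow> (real \<Rightarrow> complex) \<Rightarrow> real \<Rightarrow> complex" where
  "nderiv 0 f = f"
| "nderiv (Suc k) f = (\<lambda>x. vector_derivative (nderiv k f) (at x))"

definition schwartz :: "(real \<Rightarrow> complex) \<Rightarrow> bool" where
  "schwartz f \<longleftrightarrow>
     (\<forall>k x. nderiv k f differentiable (at x)) \<and>
     (\<forall>j k. \<exists>B. \<forall>x. (1 + \<bar>x\<bar>) ^ j * norm (nderiv k f x) \<le> B)"

text \<open>Tempered distributions: linear functionals on S(R), continuous for the
  Schwartz topology, i.e. bounded by a constant times a finite maximum of the
  seminorms sup_x (1+|x|)^j |f^(k)(x)|, j,k <= N.\<close>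
definition tempered :: "((real \<Rightarrow> complex) \<Rightarrow> complex) \<Rightarrow> bool" where
  "tempered T \<longleftrightarrow>
     (\<forall>f g. schwartz f \<longrightarrow> schwartz g \<longrightarrow> T (\<lambda>x. f x + g x) = T f + T g) \<and>
     (\<forall>c f. schwartz f \<longrightarrow> T (\<lambda>x. c * f x) = c * T f) \<and>
     (\<exists>C N. \<forall>f B. schwartz f \<longrightarrow>
         (\<forall>j\<le>N. \<forall>k\<le>N. \<forall>x. (1 + \<bar>x\<bar>) ^ j * norm (nderiv k f x) \<le> B) \<longrightarrow>
         norm (T f) \<le> C * B)"

text \<open>supp T \<subseteq> [0,\<infinity>): T vanishes on every test function whose (compact) support
  lies in the open set (-\<infinity>,0).\<close>
definition supported_nonneg :: "((real \<Rightarrow> complex) \<Rightarrow> complex) \<Rightarrow> bool" where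
  "supported_nonneg T \<longleftrightarrow>
     (\<forall>f. schwartz f \<longrightarrow> compact (closure {x. f x \<noteq> 0}) \<longrightarrow>
          closure {x. f x \<noteq> 0} \<subseteq> {..<0} \<longrightarrow> T f = 0)"

text \<open>Dilation: <g(lambda x), phi> = lambda^{-1} <g, phi(x/lambda)>.\<close>
definition dilate :: "((real \<Rightarrow> complex) \<Rightarrow> complex) \<Rightarrow> real \<Rightarrow> (real \<Rightarrow> complex) \<Rightarrow> complex" where
  "dilate T l f = T (\<lambda>x. f (x / l)) / complex_of_real l"

definition dirac :: "(real \<Rightarrow> complex) \<Rightarrow> complex" where
  "dirac f = f 0"

definition pf_H_over_x :: "(real \<Rightarrow> complex) \<Rightarrow> complex" where
  "pf_H_over_x f =
     set_lebesgue_integral lborel {0<..1} (\<lambda>x. (f x - f 0) / complex_of_real x)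
   + set_lebesgue_integral lborel {1..} (\<lambda>x. f x / complex_of_real x)"

text \<open>A fixed smooth cutoff equal to 1 on [0,\<infinity>) and 0 on (-\<infinity>,-1].\<close>
definition smooth_step_aux :: "real \<Rightarrow> real" where
  "smooth_step_aux t = (if t > 0 then exp (- 1 / t) else 0)"

definition cutoff :: "real \<Rightarrow> real" where
  "cutoff x = smooth_step_aux (x + 1) / (smooth_step_aux (x + 1) + smooth_step_aux (- x))"

text \<open>Laplace transform of a distribution supported in [0,\<infinity>):
  L{g;y} = <g(x), e^{-yx}>, realised as <g, cutoff(x) e^{-yx}> (independent of the cutoff
  by the support condition).\<close>
definition laplace :: "((real \<Rightarrow> complex) \<Rightarrow> complex) \<Rightarrow> real \<Rightarrow> complex" where
  "laplace T y = T (\<lambda>x. complex_of_real (cutoff x * exp (- y * x)))"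

end

theory Submission
  imports Defs "HOL-Computational_Algebra.Polynomial" "HOL-Real_Asymp.Real_Asymp"
begin

lemma nderiv_plus: "nderiv k (nderiv m f) = nderiv (k + m) f"
  by (induction k) auto

lemma nderiv_Suc_shift: "nderiv (Suc k) f = nderiv k (nderiv (Suc 0) f)"
  using nderiv_plus[of k "Suc 0" f] by simp

lemma nderiv_1: "nderiv (Suc 0) f = (\<lambda>x. vector_derivative f (at x))"
  by simp

definition Ck :: "nat \<Rightarrow> (real \<Rightarrow> complex) \<Rightarrow> bool" where
  "Ck k f \<longleftrightarrow> (\<forall>j\<le>k. \<forall>x. nderiv j f differentiable (at x))"

definition smth :: "(real \<Rightarrow> complex) \<Rightarrow> bool" where
  "smth f \<longleftrightarrow> (\<forall>k x. nderiv k f differentiable (at x))"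

lemma smth_Ck: "smth f \<longleftrightarrow> (\<forall>k. Ck k f)"
  unfolding smth_def Ck_def by auto

lemma Ck_0: "Ck 0 f \<longleftrightarrow> (\<forall>x. f differentiable (at x))"
  unfolding Ck_def by auto

lemma Ck_Suc: "Ck (Suc k) f \<longleftrightarrow> (\<forall>x. f differentiable (at x)) \<and> Ck k (nderiv (Suc 0) f)"
proof -
  have "Ck (Suc k) f \<longleftrightarrow> (\<forall>x. nderiv 0 f differentiable (at x)) \<and> (\<forall>j\<le>k. \<forall>x. nderiv (Suc j) f differentiable (at x))"
    unfolding Ck_def by (auto simp del: nderiv.simps) (metis not0_implies_Suc Suc_le_mono)
  then show ?thesis unfolding Ck_def nderiv_Suc_shift[symmetric] by simp
qed

lemma Ck_mono: "j \<le> k \<Longrightarrow> Ck k f \<Longrightarrow> Ck j f"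
  unfolding Ck_def by auto

lemma Ck_diffble: "Ck k f \<Longrightarrow> f differentiable (at x)"
  unfolding Ck_def by (metis le0 nderiv.simps(1))

lemma nderiv1_add:
  assumes "\<And>x. f differentiable (at x)" "\<And>x. g differentiable (at x)"
  shows "nderiv (Suc 0) (\<lambda>x. f x + g x) = (\<lambda>x. nderiv (Suc 0) f x + nderiv (Suc 0) g x)"
  using assms by simp

lemma nderiv1_diff:
  assumes "\<And>x. f differentiable (at x)" "\<And>x. g differentiable (at x)"
  shows "nderiv (Suc 0) (\<lambda>x. f x - g x) = (\<lambda>x. nderiv (Suc 0) f x - nderiv (Suc 0) g x)"
  using assms by simp

lemma nderiv1_mult:
  assumes "\<And>x. f differentiable (at x)" "\<And>x. g differentiable (at x)"
  shows "nderiv (Suc 0) (\<lambda>x. f x * g x) = (\<lambda>x. f x * nderiv (Suc 0) g x + nderiv (Suc 0) f x * g x)"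
  using assms by simp

lemma Ck_add: "Ck k f \<Longrightarrow> Ck k g \<Longrightarrow> Ck k (\<lambda>x. f x + g x)"
proof (induction k arbitrary: f g)
  case 0 then show ?case by (auto simp: Ck_0)
next
  case (Suc k)
  have d: "\<And>x. f differentiable (at x)" "\<And>x. g differentiable (at x)"
    using Suc.prems Ck_Suc by blast+
  show ?case unfolding Ck_Suc nderiv1_add[OF d]
    using Suc d by (auto simp: Ck_Suc)
qed

lemma Ck_diff: "Ck k f \<Longrightarrow> Ck k g \<Longrightarrow> Ck k (\<lambda>x. f x - g x)"
proof (induction k arbitrary: f g)
  case 0 then show ?case by (auto simp: Ck_0)
next
  case (Suc k)
  have d: "\<And>x. f differentiable (at x)" "\<And>x. g differentiable (at x)"
    using Suc.prems Ck_Suc by blast+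
  show ?case unfolding Ck_Suc nderiv1_diff[OF d]
    using Suc d by (auto simp: Ck_Suc)
qed

lemma Ck_mult: "Ck k f \<Longrightarrow> Ck k g \<Longrightarrow> Ck k (\<lambda>x. f x * g x)"
proof (induction k arbitrary: f g)
  case 0 then show ?case by (auto simp: Ck_0)
next
  case (Suc k)
  have d: "\<And>x. f differentiable (at x)" "\<And>x. g differentiable (at x)"
    using Suc.prems Ck_Suc by blast+
  have "Ck k f" "Ck k g" using Suc.prems Ck_mono[of k "Suc k"] by auto
  moreover have "Ck k (nderiv (Suc 0) f)" "Ck k (nderiv (Suc 0) g)" using Suc.prems Ck_Suc by auto
  ultimately have "Ck k (\<lambda>x. f x * nderiv (Suc 0) g x + nderiv (Suc 0) f x * g x)"
    by (intro Ck_add Suc.IH)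
  then show ?case unfolding Ck_Suc nderiv1_mult[OF d]
    using d by auto
qed

lemma Ck_const: "Ck k (\<lambda>x. c)"
proof (induction k arbitrary: c)
  case 0 then show ?case by (auto simp: Ck_0)
next
  case (Suc k)
  have "nderiv (Suc 0) (\<lambda>x. c) = (\<lambda>x. 0)"
    by (simp add: vector_derivative_at)
  then show ?case using Suc by (auto simp: Ck_Suc)
qed

lemma smth_add: "smth f \<Longrightarrow> smth g \<Longrightarrow> smth (\<lambda>x. f x + g x)"
  by (simp add: smth_Ck Ck_add)
lemma smth_diff: "smth f \<Longrightarrow> smth g \<Longrightarrow> smth (\<lambda>x. f x - g x)"
  by (simp add: smth_Ck Ck_diff)
lemma smth_mult: "smth f \<Longrightarrow> smth g \<Longrightarrow> smth (\<lambda>x. f x * g x)"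
  by (simp add: smth_Ck Ck_mult)
lemma smth_const: "smth (\<lambda>x. c)"
  by (simp add: smth_Ck Ck_const)

lemma smth_nderiv1: "smth f \<Longrightarrow> smth (nderiv (Suc 0) f)"
  unfolding smth_def nderiv_plus by blast

lemma smth_diffble: "smth f \<Longrightarrow> f differentiable (at x)"
  unfolding smth_def by (metis nderiv.simps(1))

lemma smth_inverse:
  assumes "smth h" "\<And>x. h x \<noteq> 0"
  shows "smth (\<lambda>x. inverse (h x))"
proof -
  have dh: "\<And>x. h differentiable (at x)" using assms smth_diffble by blast
  have hd: "\<And>x. ((\<lambda>x. inverse (h x)) has_vector_derivative
      (- (inverse (h x) * nderiv (Suc 0) h x * inverse (h x)))) (at x)"
  proof -
    fix x
    have "(h has_vector_derivative nderiv (Suc 0) h x) (at x)"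
      using dh by (simp add: vector_derivative_works[symmetric])
    from field_vector_diff_chain_at[OF this DERIV_inverse[OF assms(2)[of x]]]
    show "?thesis x" by (simp add: o_def power2_eq_square mult.commute mult.left_commute)
  qed
  then have d1: "nderiv (Suc 0) (\<lambda>x. inverse (h x)) = (\<lambda>x. - (inverse (h x) * nderiv (Suc 0) h x * inverse (h x)))"
    using hd by (simp add: vector_derivative_at fun_eq_iff)
  have "Ck k (\<lambda>x. inverse (h x))" for k
  proof (induction k)
    case 0 then show ?case using hd by (auto simp: Ck_0 intro: differentiableI_vector)
  next
    case (Suc k)
    have "Ck k (nderiv (Suc 0) h)" using smth_nderiv1[OF assms(1)] smth_Ck by blast
    then have "Ck k (\<lambda>x. (0 - (inverse (h x) * nderiv (Suc 0) h x)) * inverse (h x))"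
      by (intro Ck_mult Ck_diff Ck_const Suc.IH)
    then show ?case unfolding Ck_Suc d1 using hd by (auto intro: differentiableI_vector)
  qed
  then show ?thesis by (simp add: smth_Ck)
qed

lemma smth_hvd: "smth f \<Longrightarrow> (nderiv k f has_vector_derivative nderiv (Suc k) f x) (at x)"
  unfolding smth_def by (simp add: vector_derivative_works[symmetric])

lemma nderiv_add:
  assumes "smth f" "smth g"
  shows "nderiv k (\<lambda>x. f x + g x) = (\<lambda>x. nderiv k f x + nderiv k g x)"
proof (induction k)
  case 0 then show ?case by simp
next
  case (Suc k)
  show ?case
    by (simp only: nderiv.simps Suc, rule ext, rule vector_derivative_at,
        intro has_vector_derivative_add smth_hvd[simplified] assms)
qed

lemma nderiv_diff:
  assumes "smth f" "smth g"
  shows "nderiv k (\<lambda>x. f x - g x) = (\<lambda>x. nderiv k f x - nderiv k g x)"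
proof (induction k)
  case 0 then show ?case by simp
next
  case (Suc k)
  show ?case
    by (simp only: nderiv.simps Suc, rule ext, rule vector_derivative_at,
        intro has_vector_derivative_diff smth_hvd[simplified] assms)
qed

lemma nderiv_cmult:
  assumes "smth f"
  shows "nderiv k (\<lambda>x. c * f x) = (\<lambda>x. c * nderiv k f x)"
proof (induction k)
  case 0 then show ?case by simp
next
  case (Suc k)
  show ?case
    by (simp only: nderiv.simps Suc, rule ext, rule vector_derivative_at,
        intro has_vector_derivative_mult_right smth_hvd[simplified] assms)
qed

lemma nderiv_const_Suc: "nderiv (Suc k) (\<lambda>x. c) = (\<lambda>x. 0)"
proof (induction k)
  case 0 then show ?case by (simp add: vector_derivative_at)
next
  case (Suc k)
  then show ?case by (simp only: nderiv.simps(2)[of "Suc k"] Suc) (simp add: vector_derivative_at)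
qed

lemma nderiv_local:
  assumes "open U" "\<And>x. x \<in> U \<Longrightarrow> f x = g x" "x \<in> U"
  shows "nderiv k f x = nderiv k g x"
  using assms(3)
proof (induction k arbitrary: x)
  case 0 then show ?case using assms by simp
next
  case (Suc k)
  have "eventually (\<lambda>y. y \<in> UNIV \<longrightarrow> nderiv k f y = nderiv k g y) (nhds x)"
    using eventually_nhds_in_open[OF assms(1) Suc.prems] 
    by (rule eventually_mono) (use Suc.IH in auto)
  then show ?case by (simp, intro vector_derivative_cong_eq) auto
qed

lemma nderiv_affine:
  assumes "smth f"
  shows "nderiv k (\<lambda>x. f (a * x + b)) = (\<lambda>x. of_real a ^ k * nderiv k f (a * x + b))"
proof (induction k)
  case 0 then show ?case by simp
next
  case (Suc k)
  have "((\<lambda>x. of_real a ^ k * nderiv k f (a * x + b)) has_vector_derivative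
          of_real a ^ Suc k * nderiv (Suc k) f (a * x + b)) (at x)" for x
  proof -
    have l: "((\<lambda>x. a * x + b) has_vector_derivative a) (at x)"
      by (auto intro!: derivative_eq_intros simp: has_real_derivative_iff_has_vector_derivative[symmetric])
    have "((nderiv k f \<circ> (\<lambda>x. a * x + b)) has_vector_derivative a *\<^sub>R nderiv (Suc k) f (a * x + b)) (at x)"
      by (rule vector_diff_chain_at[OF l smth_hvd[OF assms]])
    then have "((\<lambda>x. nderiv k f (a * x + b)) has_vector_derivative of_real a * nderiv (Suc k) f (a * x + b)) (at x)"
      by (simp add: o_def scaleR_conv_of_real)
    from has_vector_derivative_mult_right[OF this, of "of_real a ^ k"] show ?thesis
      by (simp add: ac_simps)
  qed
  then show ?case
    by (simp only: nderiv.simps Suc) (rule ext, rule vector_derivative_at, simp)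
qed

lemma smth_affine:
  assumes "smth f"
  shows "smth (\<lambda>x. f (a * x + b))"
proof -
  have "nderiv k f differentiable (at (a * x + b))" for k x using assms smth_def by blast
  have "(\<lambda>x. of_real a ^ k * nderiv k f (a * x + b)) differentiable (at x)" for k x
  proof -
    have l: "((\<lambda>x. a * x + b) has_vector_derivative a) (at x)"
      by (auto intro!: derivative_eq_intros simp: has_real_derivative_iff_has_vector_derivative[symmetric])
    have "((nderiv k f \<circ> (\<lambda>x. a * x + b)) has_vector_derivative a *\<^sub>R nderiv (Suc k) f (a * x + b)) (at x)"
      by (rule vector_diff_chain_at[OF l smth_hvd[OF assms]])
    then have "(\<lambda>x. nderiv k f (a * x + b)) differentiable (at x)"
      by (auto simp: o_def intro: differentiableI_vector)
    then show ?thesis by (intro differentiable_mult differentiable_const)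
  qed
  then show ?thesis unfolding smth_def nderiv_affine[OF assms] by blast
qed

lemma nderiv_exp:
  "nderiv k (\<lambda>x. complex_of_real (exp (c * x))) = (\<lambda>x. of_real c ^ k * of_real (exp (c * x)))"
proof (induction k)
  case 0 then show ?case by simp
next
  case (Suc k)
  have "((\<lambda>x. of_real c ^ k * of_real (exp (c * x))) has_vector_derivative
        of_real c ^ Suc k * complex_of_real (exp (c * x))) (at x)" for x
    by (auto intro!: derivative_eq_intros has_vector_derivative_of_real simp: algebra_simps)
  then show ?case
    by (simp only: nderiv.simps Suc) (rule ext, rule vector_derivative_at, simp)
qed

lemma smth_exp: "smth (\<lambda>x. complex_of_real (exp (c * x)))"
proof -
  have "((\<lambda>x. of_real c ^ k * of_real (exp (c * x))) has_vector_derivative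
        of_real c ^ Suc k * complex_of_real (exp (c * x))) (at x)" for x k
    by (auto intro!: derivative_eq_intros has_vector_derivative_of_real simp: algebra_simps)
  then show ?thesis unfolding smth_def nderiv_exp by (blast intro: differentiableI_vector)
qed

lemma Suc_choose': "Suc n choose k = (n choose k) + (if k = 0 then 0 else (n choose (k-1)))"
  by (cases k) simp_all

lemma leibniz:
  assumes f: "smth f" and g: "smth g"
  shows "nderiv n (\<lambda>x. f x * g x) = (\<lambda>x. \<Sum>i = 0..n. of_nat (n choose i) * nderiv i f x * nderiv (n - i) g x)"
proof (induction n)
  case 0 then show ?case by simp
next
  case (Suc n)
  have sumeq: "(\<Sum>i = 0..n. of_nat (n choose i) *
          (nderiv i f x * nderiv (Suc (n - i)) g x + nderiv (Suc i) f x * nderiv (n - i) g x)) =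
       (\<Sum>i = 0..Suc n. of_nat (Suc n choose i) * nderiv i f x * nderiv (Suc n - i) g x)" for x
  proof -
    have "(\<Sum>i = 0..n. of_nat (n choose i) *
          (nderiv i f x * nderiv (Suc (n - i)) g x + nderiv (Suc i) f x * nderiv (n - i) g x)) =
      nderiv (Suc n) f x * g x + (\<Sum>i = 0..n. nderiv i f x * (of_nat (Suc n choose i) * nderiv (Suc n - i) g x))"
      apply (simp add: Suc_choose' algebra_simps sum.distrib)
      apply (subst (4) sum_Suc_reindex)
      apply (auto simp: algebra_simps Suc_diff_le intro: sum.cong)
      done
    also have "\<dots> = (\<Sum>i = 0..Suc n. of_nat (Suc n choose i) * nderiv i f x * nderiv (Suc n - i) g x)"
      by (simp add: algebra_simps)
    finally show ?thesis .
  qed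
  have "((\<lambda>x. \<Sum>i = 0..n. of_nat (n choose i) * nderiv i f x * nderiv (n - i) g x) has_vector_derivative
      (\<Sum>i = 0..n. of_nat (n choose i) *
          (nderiv i f x * nderiv (Suc (n - i)) g x + nderiv (Suc i) f x * nderiv (n - i) g x))) (at x)" (is "?hv x") for x
    unfolding mult.assoc
    by (intro has_vector_derivative_sum has_vector_derivative_mult_right has_vector_derivative_mult
        smth_hvd f g)
  show ?case
  proof (rule ext)
    fix x
    have "nderiv (Suc n) (\<lambda>x. f x * g x) x = vector_derivative (nderiv n (\<lambda>x. f x * g x)) (at x)"
      by simp
    also have "\<dots> = (\<Sum>i = 0..n. of_nat (n choose i) *
          (nderiv i f x * nderiv (Suc (n - i)) g x + nderiv (Suc i) f x * nderiv (n - i) g x))"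
      unfolding Suc by (rule vector_derivative_at) fact
    also have "\<dots> = (\<Sum>i = 0..Suc n. of_nat (Suc n choose i) * nderiv i f x * nderiv (Suc n - i) g x)"
      by (rule sumeq)
    finally show "nderiv (Suc n) (\<lambda>x. f x * g x) x = (\<Sum>i = 0..Suc n. of_nat (Suc n choose i) * nderiv i f x * nderiv (Suc n - i) g x)" .
  qed
qed

lemma polyexp_lim: "((\<lambda>u. u ^ n * poly P u / exp u) \<longlongrightarrow> (0::real)) at_top"
proof (induction P arbitrary: n rule: pCons_induct)
  case 0 then show ?case by simp
next
  case (pCons a P)
  have "((\<lambda>u. a * (u ^ n / exp u) + u ^ Suc n * poly P u / exp u) \<longlongrightarrow> a * 0 + 0) at_top"
    by (intro tendsto_intros tendsto_power_div_exp_0 pCons.IH)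
  then show ?case by (simp add: algebra_simps add_divide_distrib)
qed

definition flatf :: "real poly \<Rightarrow> real \<Rightarrow> real" where
  "flatf P t = (if t > 0 then poly P (1 / t) * exp (- 1 / t) else 0)"

definition flatQ :: "real poly \<Rightarrow> real poly" where
  "flatQ P = [:0, 0, 1:] * (P - pderiv P)"

lemma flatf_deriv: "(flatf P has_real_derivative flatf (flatQ P) t) (at t)"
proof -
  consider "t > 0" | "t < 0" | "t = 0" by linarith
  then show ?thesis
  proof cases
    case 1
    have "((\<lambda>t. poly P (1 / t) * exp (- 1 / t)) has_real_derivative flatf (flatQ P) t) (at t)"
      using 1
      apply (auto intro!: derivative_eq_intros DERIV_chain2[OF poly_DERIV]
          simp: flatf_def flatQ_def)
      apply (simp add: field_simps power2_eq_square)
      done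
    then show ?thesis
      by (rule has_field_derivative_transform_within_open[of _ _ _ "{0<..}"])
        (use 1 in \<open>auto simp: flatf_def\<close>)
  next
    case 2
    have "((\<lambda>t. 0) has_real_derivative flatf (flatQ P) t) (at t)"
      using 2 by (auto intro!: derivative_eq_intros simp: flatf_def)
    then show ?thesis
      by (rule has_field_derivative_transform_within_open[of _ _ _ "{..<0}"])
        (use 2 in \<open>auto simp: flatf_def\<close>)
  next
    case 3
    have r: "((\<lambda>y. (flatf P y - flatf P 0) / (y - 0)) \<longlongrightarrow> 0) (at_right 0)"
    proof -
      have "((\<lambda>u. u ^ 1 * poly P u / exp u) \<longlongrightarrow> (0::real)) at_top"
        by (rule polyexp_lim)
      then have "((\<lambda>x. (flatf P (inverse x) - flatf P 0) / (inverse x - 0)) \<longlongrightarrow> 0) at_top"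
        apply (rule Lim_transform_eventually)
        using eventually_gt_at_top[of 0]
        by (rule eventually_mono) (auto simp: flatf_def exp_minus field_simps)
      then show ?thesis by (simp add: filterlim_at_right_to_top)
    qed
    have l: "((\<lambda>y. (flatf P y - flatf P 0) / (y - 0)) \<longlongrightarrow> 0) (at_left 0)"
    proof -
      have "eventually (\<lambda>y. 0 = (flatf P y - flatf P 0) / (y - 0)) (at_left (0::real))"
        using eventually_at_left_real[of "-1" 0]
        by (rule eventually_mono) (auto simp: flatf_def)
      then show ?thesis by (rule Lim_transform_eventually[OF tendsto_const])
    qed
    have "flatf (flatQ P) 0 = 0" by (simp add: flatf_def)
    then show ?thesis using 3 l r
      by (simp add: has_field_derivative_iff filterlim_at_split)
  qed
qed

definition Qs :: "nat \<Rightarrow> real poly" where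
  "Qs k = (flatQ ^^ k) [:1:]"

definition Sc :: "real \<Rightarrow> complex" where
  "Sc t = complex_of_real (smooth_step_aux t)"

lemma Sc_flat: "Sc = (\<lambda>t. complex_of_real (flatf (Qs 0) t))"
  by (auto simp: Sc_def flatf_def Qs_def smooth_step_aux_def fun_eq_iff)

lemma nderiv_Sc: "nderiv k Sc = (\<lambda>t. complex_of_real (flatf (Qs k) t))"
proof (induction k)
  case 0 then show ?case by (simp add: Sc_flat)
next
  case (Suc k)
  have "((\<lambda>t. complex_of_real (flatf (Qs k) t)) has_vector_derivative
          complex_of_real (flatf (Qs (Suc k)) t)) (at t)" for t
    by (rule has_vector_derivative_of_real) (simp add: Qs_def flatf_deriv)
  then show ?case by (simp only: nderiv.simps Suc) (rule ext, rule vector_derivative_at, simp)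
qed

lemma smth_Sc: "smth Sc"
proof -
  have "((\<lambda>t. complex_of_real (flatf (Qs k) t)) has_vector_derivative
          complex_of_real (flatf (Qs (Suc k)) t)) (at t)" for t k
    by (rule has_vector_derivative_of_real) (simp add: Qs_def flatf_deriv)
  then show ?thesis unfolding smth_def nderiv_Sc by (blast intro: differentiableI_vector)
qed

definition Cc :: "real \<Rightarrow> complex" where
  "Cc x = complex_of_real (cutoff x)"

lemma ssa_nonneg: "smooth_step_aux t \<ge> 0"
  by (simp add: smooth_step_aux_def)

lemma ssa_pos_sum: "smooth_step_aux (x + 1) + smooth_step_aux (- x) > 0"
  by (cases "x > -1") (auto simp: smooth_step_aux_def add_pos_nonneg)

lemma Cc_eq: "Cc = (\<lambda>x. Sc (1 * x + 1) * inverse (Sc (1 * x + 1) + Sc ((-1) * x + 0)))"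
  by (auto simp: fun_eq_iff Cc_def Sc_def cutoff_def divide_inverse)

lemma smth_Cc: "smth Cc"
  unfolding Cc_eq
  by (intro smth_mult smth_inverse smth_add smth_affine smth_Sc)
     (metis Sc_def add.commute mult_minus_left mult_1 add_0_right of_real_add ssa_pos_sum of_real_eq_0_iff less_irrefl)

lemma cutoff_pos: "x \<ge> 0 \<Longrightarrow> cutoff x = 1"
  by (simp add: cutoff_def smooth_step_aux_def)

lemma cutoff_neg: "x \<le> -1 \<Longrightarrow> cutoff x = 0"
  by (simp add: cutoff_def smooth_step_aux_def)

lemma cutoff_bounds: "0 \<le> cutoff x" "cutoff x \<le> 1"
  using ssa_pos_sum[of x] ssa_nonneg[of "x+1"] ssa_nonneg[of "-x"]
  by (auto simp: cutoff_def divide_simps)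

lemma nderiv_zero: "nderiv k (\<lambda>x. 0) = (\<lambda>x. 0)"
  by (cases k) (simp_all add: nderiv_const_Suc del: nderiv.simps(2))

lemma nderiv_one: "nderiv k (\<lambda>x. 1) = (\<lambda>x. if k = 0 then 1 else 0)"
  by (cases k) (simp_all add: nderiv_const_Suc del: nderiv.simps(2))

lemma smth_cont: "smth f \<Longrightarrow> continuous_on S (nderiv k f)"
  unfolding smth_def
  by (meson continuous_at_imp_continuous_on differentiable_imp_continuous_within)

lemma smth_isCont: "smth f \<Longrightarrow> isCont (nderiv k f) x"
  unfolding smth_def by (meson differentiable_imp_continuous_within)

lemma compact_bound:
  fixes h :: "real \<Rightarrow> real"
  assumes "continuous_on K h" "compact K"
  shows "\<exists>M. \<forall>x\<in>K. h x \<le> M"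
proof -
  have "bounded (h ` K)" using compact_continuous_image[OF assms(1,2)] compact_imp_bounded by blast
  then obtain M where "\<forall>y\<in>h ` K. norm y \<le> M" by (auto simp: bounded_iff)
  then show ?thesis by (intro exI[of _ M]) force
qed

lemma schwartz_smth: "schwartz f \<Longrightarrow> smth f"
  unfolding schwartz_def smth_def by blast

lemma schwartz_bounds:
  assumes "schwartz f"
  obtains Bf where "\<And>j k x. (1 + \<bar>x\<bar>) ^ j * norm (nderiv k f x) \<le> Bf j k"
proof -
  have "\<forall>j k. \<exists>B. \<forall>x. (1 + \<bar>x\<bar>) ^ j * norm (nderiv k f x) \<le> B"
    using assms unfolding schwartz_def by blast
  then obtain Bf where "\<forall>j k x. (1 + \<bar>x\<bar>) ^ j * norm (nderiv k f x) \<le> Bf j k"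
    by metis
  then show ?thesis using that by blast
qed

lemma schwartz_diff:
  assumes "schwartz f" "schwartz g"
  shows "schwartz (\<lambda>x. f x - g x)"
proof -
  obtain Bf where Bf: "\<And>j k x. (1 + \<bar>x\<bar>) ^ j * norm (nderiv k f x) \<le> Bf j k"
    using schwartz_bounds[OF assms(1)] by blast
  obtain Bg where Bg: "\<And>j k x. (1 + \<bar>x\<bar>) ^ j * norm (nderiv k g x) \<le> Bg j k"
    using schwartz_bounds[OF assms(2)] by blast
  have s: "smth (\<lambda>x. f x - g x)" using assms by (intro smth_diff schwartz_smth)
  have "(1 + \<bar>x\<bar>) ^ j * norm (nderiv k f x - nderiv k g x) \<le> Bf j k + Bg j k" for j k x
  proof -
    have "(1 + \<bar>x\<bar>) ^ j * norm (nderiv k f x - nderiv k g x) \<le>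
          (1 + \<bar>x\<bar>) ^ j * (norm (nderiv k f x) + norm (nderiv k g x))"
      by (intro mult_left_mono norm_triangle_ineq4) auto
    also have "\<dots> \<le> Bf j k + Bg j k" using Bf[of x j k] Bg[of x j k] by (simp add: algebra_simps)
    finally show ?thesis .
  qed
  then show ?thesis using s unfolding schwartz_def smth_def
    nderiv_diff[OF assms[THEN schwartz_smth]] by blast
qed

lemma schwartz_mult:
  assumes f: "schwartz f" and g: "smth g" and K: "\<And>m x. norm (nderiv m g x) \<le> K m"
  shows "schwartz (\<lambda>x. f x * g x)"
proof -
  obtain Bf where Bf: "\<And>j k x. (1 + \<bar>x\<bar>) ^ j * norm (nderiv k f x) \<le> Bf j k"
    using schwartz_bounds[OF f] by blast
  have sf: "smth f" using f schwartz_smth by blast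
  have s: "smth (\<lambda>x. f x * g x)" using sf g by (intro smth_mult)
  have "(1 + \<bar>x\<bar>) ^ j * norm (nderiv k (\<lambda>x. f x * g x) x) \<le>
        (\<Sum>i = 0..k. of_nat (k choose i) * (Bf j i * K (k - i)))" for j k x
  proof -
    have "(1 + \<bar>x\<bar>) ^ j * norm (nderiv k (\<lambda>x. f x * g x) x) =
       (1 + \<bar>x\<bar>) ^ j * norm (\<Sum>i = 0..k. of_nat (k choose i) * nderiv i f x * nderiv (k - i) g x)"
      by (simp add: leibniz[OF sf g])
    also have "\<dots> \<le> (1 + \<bar>x\<bar>) ^ j * (\<Sum>i = 0..k. norm (of_nat (k choose i) * nderiv i f x * nderiv (k - i) g x))"
      by (intro mult_left_mono norm_sum) auto
    also have "\<dots> = (\<Sum>i = 0..k. of_nat (k choose i) * (((1 + \<bar>x\<bar>) ^ j * norm (nderiv i f x)) * norm (nderiv (k - i) g x)))"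
      by (simp add: sum_distrib_left norm_mult ac_simps)
    also have "\<dots> \<le> (\<Sum>i = 0..k. of_nat (k choose i) * (Bf j i * K (k - i)))"
      by (intro sum_mono mult_left_mono mult_mono Bf K) (auto intro: order_trans[OF _ Bf])
    finally show ?thesis .
  qed
  then show ?thesis using s unfolding schwartz_def smth_def by blast
qed

lemma schwartz_expo:
  assumes sf: "smth f" and c: "c > 0" and AB: "A \<le> B"
    and f0: "\<And>x. x \<le> A \<Longrightarrow> f x = 0"
    and fe: "\<And>x. x \<ge> B \<Longrightarrow> f x = complex_of_real (exp (- c * x))"
  shows "schwartz f"
proof -
  have bnd: "\<exists>M. \<forall>x. (1 + \<bar>x\<bar>) ^ j * norm (nderiv k f x) \<le> M" for j k
  proof -
    have lim: "((\<lambda>x. (1 + x) ^ j * (c ^ k * exp (- c * x))) \<longlongrightarrow> 0) at_top"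
    proof -
      have "((\<lambda>x. c ^ k * ((1 + x) ^ j * exp (- c * x))) \<longlongrightarrow> c ^ k * 0) at_top"
        using c by (intro tendsto_intros) real_asymp
      then show ?thesis by (simp add: ac_simps)
    qed
    then have "eventually (\<lambda>x. (1 + x) ^ j * (c ^ k * exp (- c * x)) < 1) at_top"
      by (rule order_tendstoD) simp
    then obtain T where T: "\<And>x. x \<ge> T \<Longrightarrow> (1 + x) ^ j * (c ^ k * exp (- c * x)) < 1"
      by (auto simp: eventually_at_top_linorder)
    define T' where "T' = max (max B T) 0"
    have "continuous_on {A..T'} (\<lambda>x. (1 + \<bar>x\<bar>) ^ j * norm (nderiv k f x))"
      by (intro continuous_intros smth_cont sf)
    from compact_bound[OF this compact_Icc] obtain M where
      M: "\<And>x. x \<in> {A..T'} \<Longrightarrow> (1 + \<bar>x\<bar>) ^ j * norm (nderiv k f x) \<le> M" by blast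
    have "(1 + \<bar>x\<bar>) ^ j * norm (nderiv k f x) \<le> max M 1" for x
    proof -
      consider "x < A" | "x \<in> {A..T'}" | "x > T'" by force
      then show ?thesis
      proof cases
        case 1
        have "nderiv k f x = nderiv k (\<lambda>x. 0) x"
          by (rule nderiv_local[of "{..<A}"]) (use 1 f0 in auto)
        then show ?thesis by (simp add: nderiv_zero)
      next
        case 2 then show ?thesis using M[of x] by simp
      next
        case 3
        have "nderiv k f x = nderiv k (\<lambda>x. complex_of_real (exp ((- c) * x))) x"
          by (rule nderiv_local[of "{B<..}"]) (use 3 fe in \<open>auto simp: T'_def\<close>)
        also have "\<dots> = of_real (- c) ^ k * of_real (exp (- c * x))"
          by (subst nderiv_exp) simp
        finally have "norm (nderiv k f x) = c ^ k * exp (- c * x)"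
          using c by (simp add: norm_mult norm_power)
        moreover have "x \<ge> T" "x \<ge> 0" using 3 AB c unfolding T'_def by auto
        ultimately show ?thesis using T[of x] by simp
      qed
    qed
    then show ?thesis by blast
  qed
  show ?thesis unfolding schwartz_def using sf bnd unfolding smth_def by blast
qed

lemma Cc_pos: "x \<ge> 0 \<Longrightarrow> Cc x = 1"
  by (simp add: Cc_def cutoff_pos)

lemma Cc_neg: "x \<le> -1 \<Longrightarrow> Cc x = 0"
  by (simp add: Cc_def cutoff_neg)

lemma nderiv_Cc_neg: "u < -1 \<Longrightarrow> nderiv m Cc u = 0"
proof -
  assume u: "u < -1"
  have "nderiv m Cc u = nderiv m (\<lambda>x. 0) u"
    by (rule nderiv_local[of "{..<-1}"]) (use u Cc_neg in auto)
  then show ?thesis by (simp add: nderiv_zero)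
qed

lemma Cc_bound: "\<exists>K. \<forall>u. norm (nderiv m Cc u) \<le> K"
proof -
  have "continuous_on {-1..0} (\<lambda>x. norm (nderiv m Cc x))"
    by (intro continuous_intros smth_cont smth_Cc)
  from compact_bound[OF this compact_Icc] obtain M where
    M: "\<And>x. x \<in> {-1..0} \<Longrightarrow> norm (nderiv m Cc x) \<le> M" by blast
  have "norm (nderiv m Cc u) \<le> max M 1" for u
  proof -
    consider "u < -1" | "u \<in> {-1..0}" | "u > 0" by force
    then show ?thesis
    proof cases
      case 1 then show ?thesis by (simp add: nderiv_Cc_neg)
    next
      case 2 then show ?thesis using M[of u] by simp
    next
      case 3
      have "nderiv m Cc u = nderiv m (\<lambda>x. 1) u"
        by (rule nderiv_local[of "{0<..}"]) (use 3 Cc_pos in auto)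
      then show ?thesis by (simp add: nderiv_one le_max_iff_disj)
    qed
  qed
  then show ?thesis by blast
qed

lemma zero_right_nderiv:
  assumes sf: "smth f" and r: "\<And>x. x \<ge> 0 \<Longrightarrow> f x = 0" and x: "x \<ge> 0"
  shows "nderiv i f x = 0"
proof -
  have pos: "nderiv i f y = 0" if "y > 0" for y
  proof -
    have "nderiv i f y = nderiv i (\<lambda>x. 0) y"
      by (rule nderiv_local[of "{0<..}"]) (use that r in auto)
    then show ?thesis by (simp add: nderiv_zero)
  qed
  show ?thesis
  proof (cases "x > 0")
    case True then show ?thesis using pos by blast
  next
    case False
    then have x0: "x = 0" using x by simp
    have "(nderiv i f \<longlongrightarrow> nderiv i f 0) (at_right 0)"
      using smth_isCont[OF sf, where k=i and x=0] by (simp add: isCont_def filterlim_at_split)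
    moreover have "(nderiv i f \<longlongrightarrow> 0) (at_right 0)"
    proof (rule Lim_transform_eventually[OF tendsto_const])
      show "\<forall>\<^sub>F y in at_right 0. 0 = nderiv i f y"
        using eventually_at_right_real[of 0 1] by (rule eventually_mono) (auto simp: pos)
    qed
    ultimately show ?thesis using x0 tendsto_unique[OF trivial_limit_at_right_real] by blast
  qed
qed

lemma flat_bound:
  assumes sf: "smth f" and r: "\<And>x. x \<ge> 0 \<Longrightarrow> f x = 0"
    and Mf: "\<And>n y. norm (nderiv n f y) \<le> Mf n"
  shows "x \<le> 0 \<Longrightarrow> norm (nderiv i f x) \<le> Mf (i + m) * \<bar>x\<bar> ^ m"
proof (induction m arbitrary: i x)
  case 0 then show ?case using Mf by simp
next
  case (Suc m)
  have Mpos: "Mf n \<ge> 0" for n using Mf[of n 0] norm_ge_zero order_trans by blast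
  let ?B = "Mf (Suc i + m) * \<bar>x\<bar> ^ m"
  have "norm (nderiv i f x - nderiv i f 0) \<le> ?B * norm (x - 0)"
  proof (rule differentiable_bound[of "{x..0}" _ "\<lambda>t h. h *\<^sub>R nderiv (Suc i) f t"])
    show "convex {x..0}" by simp
    show "x \<in> {x..0}" "0 \<in> {x..0}" using Suc.prems by auto
    fix t assume t: "t \<in> {x..0}"
    show "(nderiv i f has_derivative (\<lambda>h. h *\<^sub>R nderiv (Suc i) f t)) (at t within {x..0})"
      using smth_hvd[OF sf, of i t] unfolding has_vector_derivative_def
      by (rule has_derivative_at_withinI)
    have "onorm (\<lambda>h. h *\<^sub>R nderiv (Suc i) f t) = norm (nderiv (Suc i) f t)"
      using onorm_scaleR_left[OF bounded_linear_ident, of "nderiv (Suc i) f t"] onorm_id[where 'a=real] by simp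
    also have "\<dots> \<le> Mf (Suc i + m) * \<bar>t\<bar> ^ m" using t by (intro Suc.IH) auto
    also have "\<dots> \<le> ?B" using t Mpos by (intro mult_left_mono power_mono) auto
    finally show "onorm (\<lambda>h. h *\<^sub>R nderiv (Suc i) f t) \<le> ?B" .
  qed
  moreover have "nderiv i f 0 = 0" by (rule zero_right_nderiv[OF sf r order_refl])
  ultimately show ?case by (simp add: algebra_simps)
qed

lemma eps_pow: 
  fixes e :: real
  assumes "0 < e" "e \<le> 1" "p \<le> N"
  shows "e ^ (N + 1) * (1 / e) ^ p \<le> e"
proof -
  have "e ^ (N + 1) = e ^ (N + 1 - p) * e ^ p" using assms(3)
    by (simp add: power_add[symmetric])
  then have "e ^ (N + 1) * (1 / e) ^ p = e ^ (N + 1 - p)"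
    using assms by (simp add: power_one_over field_simps)
  also have "\<dots> \<le> e ^ 1" using assms by (intro power_decreasing) auto
  finally show ?thesis by simp
qed

lemma support_zero:
  assumes T: "tempered T" and sup: "supported_nonneg T" and f: "schwartz f"
    and r: "\<And>x. x \<ge> 0 \<Longrightarrow> f x = 0" and l: "\<And>x. x \<le> -R \<Longrightarrow> f x = 0"
  shows "T f = 0"
proof -
  obtain C N where CN: "\<And>f B. schwartz f \<Longrightarrow>
         (\<forall>j\<le>N. \<forall>k\<le>N. \<forall>x. (1 + \<bar>x\<bar>) ^ j * norm (nderiv k f x) \<le> B) \<Longrightarrow>
         norm (T f) \<le> C * B"
    using T unfolding tempered_def by blast
  have add: "\<And>f g. schwartz f \<Longrightarrow> schwartz g \<Longrightarrow> T (\<lambda>x. f x + g x) = T f + T g"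
    using T unfolding tempered_def by blast
  have sf: "smth f" using f schwartz_smth by blast
  obtain Bf where Bf: "\<And>j k x. (1 + \<bar>x\<bar>) ^ j * norm (nderiv k f x) \<le> Bf j k"
    using schwartz_bounds[OF f] by blast
  define Mf where "Mf n = Bf 0 n" for n
  have Mf: "norm (nderiv n f y) \<le> Mf n" for n y using Bf[of y 0 n] by (simp add: Mf_def)
  have Mpos: "Mf n \<ge> 0" for n using Mf[of n 0] norm_ge_zero order_trans by blast
  obtain Kc where Kc: "\<And>m u. norm (nderiv m Cc u) \<le> Kc m"
    using Cc_bound by metis
  have Kpos: "Kc m \<ge> 0" for m using Kc[of m 0] norm_ge_zero order_trans by blast
  define MM where "MM = (\<Sum>n\<le>2 * N + 1. Mf n)"
  define KK where "KK = (\<Sum>m\<le>N. Kc m)"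
  have MM: "Mf n \<le> MM" if "n \<le> 2 * N + 1" for n
    unfolding MM_def using that Mpos by (intro member_le_sum) auto
  have KK: "Kc m \<le> KK" if "m \<le> N" for m
    unfolding KK_def using that Kpos by (intro member_le_sum) auto
  have MMpos: "MM \<ge> 0" using MM[of 0] Mpos[of 0] by simp
  have KKpos: "KK \<ge> 0" using KK[of 0] Kpos[of 0] by simp
  define W where "W = 3 ^ N * 2 ^ N * (MM * 2 ^ (N + 1) * KK)"
  have Wpos: "W \<ge> 0" using MMpos KKpos by (simp add: W_def)
  have main: "norm (T f) \<le> C * (W * e)" if e: "0 < e" "e \<le> 1" for e
  proof -
    define ce where "ce = (\<lambda>x. Cc ((1 / e) * x + 1))"
    have sce: "smth ce" unfolding ce_def by (intro smth_affine smth_Cc)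
    have nce: "nderiv k ce x = of_real (1 / e) ^ k * nderiv k Cc ((1 / e) * x + 1)" for k x
      unfolding ce_def nderiv_affine[OF smth_Cc] ..
    have bce: "norm (nderiv k ce x) \<le> (1 / e) ^ k * Kc k" for k x
    proof -
      have "norm (nderiv k ce x) = (1 / e) ^ k * norm (nderiv k Cc ((1 / e) * x + 1))"
        unfolding nce using e by (simp add: norm_mult norm_power norm_divide)
      also have "\<dots> \<le> (1 / e) ^ k * Kc k" using e Kc[of k "(1 / e) * x + 1"] by (intro mult_left_mono) auto
      finally show ?thesis .
    qed
    define g where "g = (\<lambda>x. f x * ce x)"
    define h where "h = (\<lambda>x. f x - g x)"
    have sg: "schwartz g" unfolding g_def by (rule schwartz_mult[OF f sce bce])
    have sh: "schwartz h" unfolding h_def by (rule schwartz_diff[OF f sg])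
    have hsub: "{x. h x \<noteq> 0} \<subseteq> {-R..-e}"
    proof
      fix x assume "x \<in> {x. h x \<noteq> 0}"
      then have hx: "h x \<noteq> 0" by simp
      have "f x \<noteq> 0" using hx by (auto simp: h_def g_def)
      then have "x > -R" using l by (meson not_le)
      moreover have "x \<le> -e"
      proof (rule ccontr)
        assume "\<not> x \<le> -e"
        then have "(1 / e) * x + 1 \<ge> 0" using e by (simp add: field_simps)
        then have "ce x = 1" by (simp add: ce_def Cc_pos)
        then show False using hx by (simp add: h_def g_def)
      qed
      ultimately show "x \<in> {-R..-e}" by simp
    qed
    have cl: "closure {x. h x \<noteq> 0} \<subseteq> {-R..-e}"
      by (rule closure_minimal[OF hsub]) simp
    have "compact (closure {x. h x \<noteq> 0})"
    proof -
      have "compact ({-R..-e} \<inter> closure {x. h x \<noteq> 0})"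
        by (intro compact_Int_closed) auto
      then show ?thesis using cl by (simp add: Int_absorb1)
    qed
    moreover have "closure {x. h x \<noteq> 0} \<subseteq> {..<0}" using cl e by auto
    ultimately have Th: "T h = 0" using sup sh unfolding supported_nonneg_def by blast
    have "f = (\<lambda>x. h x + g x)" by (simp add: h_def)
    then have "T f = T h + T g" using add[OF sh sg] by simp
    then have Tf: "T f = T g" using Th by simp
    have bnd: "(1 + \<bar>x\<bar>) ^ j * norm (nderiv k g x) \<le> W * e" if jk: "j \<le> N" "k \<le> N" for j k x
    proof -
      have ng: "nderiv k g x = (\<Sum>i = 0..k. of_nat (k choose i) * nderiv i f x * nderiv (k - i) ce x)"
        unfolding g_def by (simp add: leibniz[OF sf sce])
      consider "x \<ge> 0" | "x < -2 * e" | "-2 * e \<le> x" "x < 0" by linarith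
      then show ?thesis
      proof cases
        case 1
        then have "nderiv k g x = 0" unfolding ng using zero_right_nderiv[OF sf r] by simp
        then show ?thesis using Wpos e by simp
      next
        case 2
        then have "(1 / e) * x + 1 < -1" using e by (simp add: field_simps)
        then have "nderiv k g x = 0" unfolding ng nce by (simp add: nderiv_Cc_neg)
        then show ?thesis using Wpos e by simp
      next
        case 3
        have ax: "\<bar>x\<bar> \<le> 2 * e" using 3 by simp
        have x0: "x \<le> 0" using 3 by simp
        have tm: "norm (nderiv i f x * nderiv (k - i) ce x) \<le> MM * 2 ^ (N + 1) * KK * e"
          if "i \<in> {0..k}" for i
        proof -
          have "norm (nderiv i f x) \<le> Mf (i + (N + 1)) * \<bar>x\<bar> ^ (N + 1)"
            by (rule flat_bound[OF sf r Mf x0])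
          also have "\<dots> \<le> MM * (2 * e) ^ (N + 1)"
            using that jk ax Mpos MMpos MM[of "i + (N + 1)"]
            by (intro mult_mono power_mono) auto
          finally have n1: "norm (nderiv i f x) \<le> MM * (2 * e) ^ (N + 1)" .
          have n2: "norm (nderiv (k - i) ce x) \<le> (1 / e) ^ (k - i) * KK"
            using bce[of "k - i" x] KK[of "k - i"] jk e
            by (smt (verit) divide_pos_pos mult_left_mono zero_le_power zero_less_one diff_le_self le_trans)
          have "norm (nderiv i f x * nderiv (k - i) ce x) \<le> (MM * (2 * e) ^ (N + 1)) * ((1 / e) ^ (k - i) * KK)"
            unfolding norm_mult using n1 n2 MMpos e by (intro mult_mono) auto
          also have "\<dots> = MM * 2 ^ (N + 1) * KK * (e ^ (N + 1) * (1 / e) ^ (k - i))"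
            by (simp add: power_mult_distrib)
          also have "\<dots> \<le> MM * 2 ^ (N + 1) * KK * e"
            using eps_pow[OF e, of "k - i" N] jk MMpos KKpos by (intro mult_left_mono) auto
          finally show ?thesis .
        qed
        have "norm (nderiv k g x) \<le> (\<Sum>i = 0..k. norm (of_nat (k choose i) * nderiv i f x * nderiv (k - i) ce x))"
          unfolding ng by (rule norm_sum)
        also have "\<dots> = (\<Sum>i = 0..k. of_nat (k choose i) * norm (nderiv i f x * nderiv (k - i) ce x))"
          by (simp add: norm_mult mult.assoc)
        also have "\<dots> \<le> (\<Sum>i = 0..k. of_nat (k choose i) * (MM * 2 ^ (N + 1) * KK * e))"
          using tm by (intro sum_mono mult_left_mono) auto
        also have "\<dots> = 2 ^ k * (MM * 2 ^ (N + 1) * KK * e)"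
          using choose_row_sum[of k] by (simp add: sum_distrib_right[symmetric] atLeast0AtMost of_nat_sum[symmetric])
        also have "\<dots> \<le> 2 ^ N * (MM * 2 ^ (N + 1) * KK * e)"
          using jk MMpos KKpos e by (intro mult_right_mono power_increasing) auto
        finally have ng2: "norm (nderiv k g x) \<le> 2 ^ N * (MM * 2 ^ (N + 1) * KK * e)" .
        have "(1 + \<bar>x\<bar>) ^ j \<le> 3 ^ N"
        proof -
          have "(1 + \<bar>x\<bar>) ^ j \<le> 3 ^ j" using ax e by (intro power_mono) auto
          also have "\<dots> \<le> 3 ^ N" using jk by (intro power_increasing) auto
          finally show ?thesis .
        qed
        then have "(1 + \<bar>x\<bar>) ^ j * norm (nderiv k g x) \<le> 3 ^ N * (2 ^ N * (MM * 2 ^ (N + 1) * KK * e))"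
          using ng2 by (intro mult_mono) auto
        then show ?thesis by (simp add: W_def ac_simps)
      qed
    qed
    show ?thesis unfolding Tf by (rule CN[OF sg]) (use bnd in blast)
  qed
  show ?thesis
  proof (rule ccontr)
    assume ne: "T f \<noteq> 0"
    define D where "D = \<bar>C * W\<bar>"
    define e where "e = min 1 (norm (T f) / (2 * (D + 1)))"
    have Dpos: "D \<ge> 0" by (simp add: D_def)
    have e: "0 < e" "e \<le> 1" using ne Dpos by (auto simp: e_def)
    have "norm (T f) \<le> C * (W * e)" by (rule main[OF e])
    also have "\<dots> \<le> D * e" using e by (simp add: D_def mult.assoc[symmetric] abs_ge_self mult_right_mono)
    also have "\<dots> \<le> D * (norm (T f) / (2 * (D + 1)))"
      using Dpos by (intro mult_left_mono) (auto simp: e_def)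
    also have "\<dots> < norm (T f)"
      using ne Dpos by (simp add: field_simps add_nonneg_pos)
    finally show False by simp
  qed
qed

lemma conv_lborel:
  fixes f :: "real \<Rightarrow> real"
  assumes m: "(\<lambda>t. indicator A t *\<^sub>R f t) \<in> borel_measurable lborel"
    and a: "f absolutely_integrable_on A"
  shows "set_integrable lborel A f" "(LINT t:A|lborel. f t) = integral A f"
proof -
  show si: "set_integrable lborel A f"
    using a m unfolding set_integrable_def by (simp add: integrable_completion)
  show "(LINT t:A|lborel. f t) = integral A f"
    by (rule set_borel_integral_eq_integral(2)[OF si])
qed

lemma spike0:
  fixes f :: "real \<Rightarrow> real"
  assumes "(f has_integral I) {0..c}"
  shows "(f has_integral I) {0<..c}"
proof -
  have "negligible {x \<in> {0..c} - {0<..c}. f x \<noteq> 0}"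
    by (rule negligible_subset[of "{0}"]) auto
  moreover have "negligible {x \<in> {0<..c} - {0..c}. f x \<noteq> 0}"
    by (rule negligible_subset[of "{}"]) auto
  ultimately show ?thesis using has_integral_spike_set_eq assms by blast
qed

lemma Gamma_lborel:
  fixes s :: real
  assumes s: "s > 0"
  shows "set_integrable lborel {0<..} (\<lambda>t. t powr (s - 1) / exp t)"
    "(LINT t:{0<..}|lborel. t powr (s - 1) / exp t) = Gamma s"
proof -
  have h: "((\<lambda>t. t powr (s - 1) / exp t) has_integral Gamma s) {0<..}"
  proof -
    have "((\<lambda>t. t powr (s - 1) / exp t) has_integral Gamma s) {0..}"
      by (rule Gamma_integral_real[OF s])
    moreover have "negligible {x \<in> {0..} - {0<..}. (\<lambda>t. t powr (s - 1) / exp t) x \<noteq> 0}"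
      by (rule negligible_subset[of "{0}"]) auto
    moreover have "negligible {x \<in> {0<..} - {0..}. (\<lambda>t. t powr (s - 1) / exp t) x \<noteq> 0}"
      by (rule negligible_subset[of "{}"]) auto
    ultimately show ?thesis
      using has_integral_spike_set_eq[of "{0..}" "{0<..}" "\<lambda>t. t powr (s - 1) / exp t" "Gamma s"] by simp
  qed
  have a: "(\<lambda>t. t powr (s - 1) / exp t) absolutely_integrable_on {0<..}"
    using h by (intro nonnegative_absolutely_integrable_1) (auto simp: integrable_on_def)
  have m: "(\<lambda>t. indicator {0<..} t *\<^sub>R (t powr (s - 1) / exp t)) \<in> borel_measurable lborel"
    by measurable
  show "set_integrable lborel {0<..} (\<lambda>t. t powr (s - 1) / exp t)"
    using conv_lborel[OF m a] by simp
  show "(LINT t:{0<..}|lborel. t powr (s - 1) / exp t) = Gamma s"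
    using conv_lborel[OF m a] h by (simp add: integral_unique)
qed

lemma powr_lborel:
  fixes s :: real
  assumes s: "s > 0"
  shows "set_integrable lborel {0<..1} (\<lambda>t. t powr (s - 1))"
    "(LINT t:{0<..1}|lborel. t powr (s - 1)) = 1 / s"
proof -
  have h: "((\<lambda>t. t powr (s - 1)) has_integral 1 / s) {0<..1}"
    using spike0[OF has_integral_powr_from_0[of "s - 1" 1]] s by simp
  have a: "(\<lambda>t. t powr (s - 1)) absolutely_integrable_on {0<..1}"
    using h by (intro nonnegative_absolutely_integrable_1) (auto simp: integrable_on_def)
  have m: "(\<lambda>t. indicator {0<..1} t *\<^sub>R (t powr (s - 1))) \<in> borel_measurable lborel"
    by measurable
  show "set_integrable lborel {0<..1} (\<lambda>t. t powr (s - 1))"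
    using conv_lborel[OF m a] by simp
  show "(LINT t:{0<..1}|lborel. t powr (s - 1)) = 1 / s"
    using conv_lborel[OF m a] h by (simp add: integral_unique)
qed

definition aa :: "real \<Rightarrow> real \<Rightarrow> real" where
  "aa s t = t powr (s - 1) / exp t - t powr (s - 1)"

definition bb :: "real \<Rightarrow> real \<Rightarrow> real" where
  "bb s t = t powr (s - 1) / exp t"

lemma split_Gamma:
  fixes s :: real
  assumes s: "s > 0"
  shows "(LINT t:{0<..1}|lborel. aa s t) + (LINT t:{1<..}|lborel. bb s t) = Gamma s - 1 / s"
proof -
  note G = Gamma_lborel[OF s]
  have i1: "set_integrable lborel {0<..1} (\<lambda>t. t powr (s - 1) / exp t)"
    by (rule set_integrable_subset[OF G(1)]) auto
  have i2: "set_integrable lborel {1<..} (\<lambda>t. t powr (s - 1) / exp t)"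
    by (rule set_integrable_subset[OF G(1)]) auto
  have "Gamma s = (LINT t:{0<..1} \<union> {1<..}|lborel. t powr (s - 1) / exp t)"
    using G(2) by (simp add: ivl_disj_un)
  also have "\<dots> = (LINT t:{0<..1}|lborel. t powr (s - 1) / exp t) + (LINT t:{1<..}|lborel. t powr (s - 1) / exp t)"
    by (rule set_integral_Un[OF _ i1 i2]) auto
  finally have "Gamma s = (LINT t:{0<..1}|lborel. t powr (s - 1) / exp t) + (LINT t:{1<..}|lborel. bb s t)"
    by (simp add: bb_def)
  moreover have "(LINT t:{0<..1}|lborel. aa s t) = (LINT t:{0<..1}|lborel. t powr (s - 1) / exp t) - 1 / s"
    unfolding aa_def using set_integral_diff(2)[OF i1 powr_lborel(1)[OF s]] powr_lborel(2)[OF s] by simp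
  ultimately show ?thesis by simp
qed

lemma aa_bound:
  assumes "0 < s" "s \<le> 1" "0 < t" "t \<le> 1"
  shows "norm (aa s t) \<le> 1"
proof -
  have e: "1 - 1 / exp t \<le> t" "1 / exp t \<le> 1"
    using exp_ge_add_one_self[of "-t"] assms by (auto simp: exp_minus field_simps)
  have nn: "0 \<le> t powr (s - 1) * (1 - 1 / exp t)" using e by simp
  have "aa s t = - (t powr (s - 1) * (1 - 1 / exp t))" by (simp add: aa_def algebra_simps)
  then have "norm (aa s t) = t powr (s - 1) * (1 - 1 / exp t)" using nn by simp
  also have "\<dots> \<le> t powr (s - 1) * t" using e by (intro mult_left_mono) auto
  also have "\<dots> = t powr s" using assms by (simp add: powr_diff)
  also have "\<dots> \<le> 1" using assms by (intro powr_le1) auto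
  finally show ?thesis .
qed

lemma bb_bound:
  assumes "0 < s" "s \<le> 1" "1 < t"
  shows "norm (bb s t) \<le> bb 1 t"
proof -
  have "t powr (s - 1) \<le> t powr (1 - 1)" using assms by (intro powr_mono) auto
  then show ?thesis using assms by (simp add: bb_def divide_right_mono)
qed

definition sn :: "nat \<Rightarrow> real" where "sn n = 1 / (real n + 1)"

lemma sn: "0 < sn n" "sn n \<le> 1"
  by (auto simp: sn_def field_simps)

lemma sn_lim: "sn \<longlonglongrightarrow> 0"
  unfolding sn_def using LIMSEQ_inverse_real_of_nat by (simp add: inverse_eq_divide add.commute)

lemma lim_A: "(\<lambda>n. LINT t:{0<..1}|lborel. aa (sn n) t) \<longlonglongrightarrow> (LINT t:{0<..1}|lborel. aa 0 t)"
  unfolding set_lebesgue_integral_def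
proof (rule integral_dominated_convergence[where w = "indicator {0<..1}"])
  show "(\<lambda>t. indicator {0<..1} t *\<^sub>R aa 0 t) \<in> borel_measurable lborel"
    unfolding aa_def by measurable
  show "(\<lambda>t. indicator {0<..1} t *\<^sub>R aa (sn i) t) \<in> borel_measurable lborel" for i
    unfolding aa_def by measurable
  show "integrable lborel (indicator {0<..1} :: real \<Rightarrow> real)" by simp
  show "AE t in lborel. (\<lambda>i. indicator {0<..1} t *\<^sub>R aa (sn i) t) \<longlonglongrightarrow> indicator {0<..1} t *\<^sub>R aa 0 t"
  proof (rule AE_I2)
    fix t :: real
    show "(\<lambda>i. indicator {0<..1} t *\<^sub>R aa (sn i) t) \<longlonglongrightarrow> indicator {0<..1} t *\<^sub>R aa 0 t"
    proof (cases "t \<in> {0<..1}")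
      case True
      have l: "(\<lambda>i. sn i - 1) \<longlonglongrightarrow> 0 - 1" by (intro tendsto_diff sn_lim tendsto_const)
      have pw: "(\<lambda>i. t powr (sn i - 1)) \<longlonglongrightarrow> t powr (0 - 1)"
        by (rule tendsto_powr[OF tendsto_const l]) (use True in auto)
      have "(\<lambda>i. aa (sn i) t) \<longlonglongrightarrow> aa 0 t"
        unfolding aa_def by (rule tendsto_diff[OF tendsto_divide[OF pw tendsto_const] pw]) simp
      then show ?thesis using True by simp
    qed simp
  qed
  show "AE t in lborel. norm (indicator {0<..1} t *\<^sub>R aa (sn i) t) \<le> indicator {0<..1} t" for i
    using aa_bound[OF sn(1) sn(2)] by (intro AE_I2) (auto simp: indicator_def)
qed

lemma bb1_int: "set_integrable lborel {1<..} (bb 1)"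
proof -
  have "set_integrable lborel {0<..} (\<lambda>t::real. t powr (1 - 1) / exp t)"
    by (rule Gamma_lborel(1)) simp
  then have "set_integrable lborel {1<..} (\<lambda>t::real. t powr (1 - 1) / exp t)"
    by (rule set_integrable_subset) auto
  then show ?thesis unfolding bb_def .
qed

lemma lim_B: "(\<lambda>n. LINT t:{1<..}|lborel. bb (sn n) t) \<longlonglongrightarrow> (LINT t:{1<..}|lborel. bb 0 t)"
  unfolding set_lebesgue_integral_def
proof (rule integral_dominated_convergence[where w = "\<lambda>t. indicator {1<..} t *\<^sub>R bb 1 t"])
  show "(\<lambda>t. indicator {1<..} t *\<^sub>R bb 0 t) \<in> borel_measurable lborel"
    unfolding bb_def by measurable
  show "(\<lambda>t. indicator {1<..} t *\<^sub>R bb (sn i) t) \<in> borel_measurable lborel" for i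
    unfolding bb_def by measurable
  show "integrable lborel (\<lambda>t. indicator {1<..} t *\<^sub>R bb 1 t)"
    using bb1_int unfolding set_integrable_def .
  show "AE t in lborel. (\<lambda>i. indicator {1<..} t *\<^sub>R bb (sn i) t) \<longlonglongrightarrow> indicator {1<..} t *\<^sub>R bb 0 t"
  proof (rule AE_I2)
    fix t :: real
    show "(\<lambda>i. indicator {1<..} t *\<^sub>R bb (sn i) t) \<longlonglongrightarrow> indicator {1<..} t *\<^sub>R bb 0 t"
    proof (cases "t \<in> {1<..}")
      case True
      have l: "(\<lambda>i. sn i - 1) \<longlonglongrightarrow> 0 - 1" by (intro tendsto_diff sn_lim tendsto_const)
      have "(\<lambda>i. t powr (sn i - 1)) \<longlonglongrightarrow> t powr (0 - 1)"
        by (rule tendsto_powr[OF tendsto_const l]) (use True in auto)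
      then have "(\<lambda>i. bb (sn i) t) \<longlonglongrightarrow> bb 0 t"
        unfolding bb_def by (rule tendsto_divide[OF _ tendsto_const]) simp_all
      then show ?thesis using True by simp
    qed simp
  qed
  show "AE t in lborel. norm (indicator {1<..} t *\<^sub>R bb (sn i) t) \<le> indicator {1<..} t *\<^sub>R bb 1 t" for i
    using bb_bound[OF sn(1) sn(2)] by (intro AE_I2) (auto simp: indicator_def)
qed

lemma lim_Gamma: "(\<lambda>n. Gamma (sn n) - 1 / sn n) \<longlonglongrightarrow> - euler_mascheroni"
proof -
  have "(Gamma has_field_derivative Gamma 1 * Digamma 1) (at (1::real))"
    by (rule has_field_derivative_Gamma) auto
  then have d: "((\<lambda>y. (Gamma y - Gamma 1) / (y - 1)) \<longlongrightarrow> - euler_mascheroni) (at (1::real))"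
    by (simp add: has_field_derivative_iff)
  have f: "filterlim (\<lambda>n. 1 + sn n) (at 1) sequentially"
    unfolding filterlim_at
  proof
    show "\<forall>\<^sub>F n in sequentially. 1 + sn n \<in> UNIV \<and> 1 + sn n \<noteq> 1"
      using sn(1) by (intro always_eventually) (metis UNIV_I add_cancel_left_right less_irrefl)
    show "(\<lambda>n. 1 + sn n) \<longlonglongrightarrow> 1" using tendsto_add[OF tendsto_const sn_lim, of 1] by simp
  qed
  have "(\<lambda>n. (Gamma (1 + sn n) - Gamma 1) / (1 + sn n - 1)) \<longlonglongrightarrow> - euler_mascheroni"
    by (rule filterlim_compose[OF d f])
  moreover have "(Gamma (1 + sn n) - Gamma 1) / (1 + sn n - 1) = Gamma (sn n) - 1 / sn n" for n
  proof -
    have "Gamma (sn n + 1) = sn n * Gamma (sn n)"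
      by (rule Gamma_plus1) (use sn(1)[of n] in \<open>auto elim!: nonpos_Ints_cases\<close>)
    then show ?thesis using sn(1)[of n] by (simp add: add.commute field_simps)
  qed
  ultimately show ?thesis by simp
qed

lemma real_pf: "(LINT t:{0<..1}|lborel. aa 0 t) + (LINT t:{1<..}|lborel. bb 0 t) = - euler_mascheroni"
proof -
  have "(\<lambda>n. (LINT t:{0<..1}|lborel. aa (sn n) t) + (LINT t:{1<..}|lborel. bb (sn n) t))
        \<longlonglongrightarrow> (LINT t:{0<..1}|lborel. aa 0 t) + (LINT t:{1<..}|lborel. bb 0 t)"
    by (intro tendsto_add lim_A lim_B)
  moreover have "(\<lambda>n. (LINT t:{0<..1}|lborel. aa (sn n) t) + (LINT t:{1<..}|lborel. bb (sn n) t))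
        \<longlonglongrightarrow> - euler_mascheroni"
    using lim_Gamma by (simp add: split_Gamma[OF sn(1)])
  ultimately show ?thesis using LIMSEQ_unique by blast
qed

lemma pf_psi: "pf_H_over_x (\<lambda>x. complex_of_real (cutoff x * exp (- x))) = - euler_mascheroni"
proof -
  have e1: "(LINT x:{0<..1}|lborel. (complex_of_real (cutoff x * exp (- x)) - complex_of_real (cutoff 0 * exp (- 0))) / complex_of_real x)
      = (LINT x:{0<..1}|lborel. complex_of_real (aa 0 x))"
    by (rule set_lebesgue_integral_cong) (auto simp: cutoff_pos aa_def exp_minus powr_minus field_simps)
  have e2: "(LINT x:{1..}|lborel. complex_of_real (cutoff x * exp (- x)) / complex_of_real x)
      = (LINT x:{1..}|lborel. complex_of_real (bb 0 x))"
    by (rule set_lebesgue_integral_cong) (auto simp: cutoff_pos bb_def exp_minus powr_minus field_simps)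
  have e3: "(LINT x:{1..}|lborel. bb 0 x) = (LINT x:{1<..}|lborel. bb 0 x)"
    unfolding set_lebesgue_integral_def
  proof (rule integral_cong_AE)
    show "(\<lambda>x. indicator {1..} x *\<^sub>R bb 0 x) \<in> borel_measurable lborel"
      unfolding bb_def by measurable
    show "(\<lambda>x. indicator {1<..} x *\<^sub>R bb 0 x) \<in> borel_measurable lborel"
      unfolding bb_def by measurable
    show "AE x in lborel. indicator {1..} x *\<^sub>R bb 0 x = indicator {1<..} x *\<^sub>R bb 0 x"
      using AE_lborel_singleton[of 1] by (rule eventually_mono) (auto simp: indicator_def)
  qed
  show ?thesis
    unfolding pf_H_over_x_def e1 e2 set_integral_complex_of_real e3
    using arg_cong[OF real_pf, of complex_of_real] by simp
qed

definition psi :: "real \<Rightarrow> complex" where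
  "psi x = complex_of_real (cutoff x * exp (- x))"

lemma psi_eq: "psi = (\<lambda>x. Cc x * complex_of_real (exp ((- 1) * x)))"
  by (auto simp: psi_def Cc_def fun_eq_iff)

lemma smth_psi: "smth psi"
  unfolding psi_eq by (intro smth_mult smth_Cc smth_exp)

lemma schwartz_psi: "schwartz psi"
  by (rule schwartz_expo[OF smth_psi, of 1 "-1" 0])
     (auto simp: psi_def cutoff_neg cutoff_pos)

lemma psi0: "psi 0 = 1"
  by (simp add: psi_def cutoff_pos)

theorem theorem3p1:
  fixes g :: "(real \<Rightarrow> complex) \<Rightarrow> complex" and a b :: complex
  assumes "tempered g"
    and "supported_nonneg g"
    and "\<forall>f. schwartz f \<longrightarrow>
           ((\<lambda>l. complex_of_real l *
               (dilate g l f
                - (a / complex_of_real l * dirac f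
                   + b * complex_of_real (ln l / l) * dirac f
                   + b / complex_of_real l * pf_H_over_x f)))
            \<longlongrightarrow> 0) at_top"
  shows "((\<lambda>y. laplace g y - (a - b * euler_mascheroni + b * complex_of_real (ln (1 / y))))
           \<longlongrightarrow> 0) (at_right 0)"
proof -
  have add: "\<And>f h. schwartz f \<Longrightarrow> schwartz h \<Longrightarrow> g (\<lambda>x. f x + h x) = g f + g h"
    using assms(1) unfolding tempered_def by blast
  have pf: "pf_H_over_x psi = - euler_mascheroni"
    using pf_psi unfolding psi_def by simp
  define H where "H l = complex_of_real l *
               (dilate g l psi
                - (a / complex_of_real l * dirac psi
                   + b * complex_of_real (ln l / l) * dirac psi
                   + b / complex_of_real l * pf_H_over_x psi))" for l
  have H: "(H \<longlongrightarrow> 0) at_top"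
    using assms(3) schwartz_psi unfolding H_def by blast
  have lap: "laplace g y = g (\<lambda>x. psi (x / (1 / y)))" if y: "y > 0" for y
  proof -
    define F where "F x = complex_of_real (cutoff x * exp (- y * x))" for x
    define G where "G x = psi (x / (1 / y))" for x
    have sF: "schwartz F"
    proof (rule schwartz_expo[of F y "-1" 0])
      have "F = (\<lambda>x. Cc x * complex_of_real (exp ((- y) * x)))"
        by (auto simp: F_def Cc_def fun_eq_iff)
      then show "smth F" using smth_mult[OF smth_Cc smth_exp[of "-y"]] by simp
    qed (use y in \<open>auto simp: F_def cutoff_neg cutoff_pos\<close>)
    have sG: "schwartz G"
    proof (rule schwartz_expo[of G y "-1 / y" 0])
      have "G = (\<lambda>x. psi (y * x + 0))" by (auto simp: G_def fun_eq_iff mult.commute)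
      then show "smth G" using smth_affine[OF smth_psi, of y 0] by simp
      fix x :: real assume "x \<le> -1 / y"
      then have "x * y \<le> -1" using y by (simp add: field_simps)
      then show "G x = 0" by (simp add: G_def psi_def cutoff_neg)
    next
      fix x :: real assume "x \<ge> 0"
      then show "G x = complex_of_real (exp (- y * x))" 
        using y by (simp add: G_def psi_def cutoff_pos mult.commute)
    qed (use y in auto)
    define D where "D x = F x - G x" for x
    have sD: "schwartz D" unfolding D_def using sF sG by (rule schwartz_diff)
    have "g D = 0"
    proof (rule support_zero[OF assms(1,2) sD, of "max 1 (1 / y)"])
      fix x :: real assume "x \<ge> 0"
      then show "D x = 0" using y by (simp add: D_def F_def G_def psi_def cutoff_pos mult.commute)
    next
      fix x :: real assume x: "x \<le> - max 1 (1 / y)"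
      then have "x \<le> -1" by simp
      moreover have "x * y \<le> -1"
      proof -
        have "x \<le> - (1 / y)" using x by simp
        then show ?thesis using y by (simp add: field_simps)
      qed
      ultimately show "D x = 0" by (simp add: D_def F_def G_def psi_def cutoff_neg)
    qed
    have "F = (\<lambda>x. G x + D x)" by (simp add: D_def)
    then have "g F = g G + g D" using add[OF sG sD] by simp
    then have "g F = g G" using \<open>g D = 0\<close> by simp
    moreover have "laplace g y = g F" unfolding laplace_def F_def by simp
    moreover have "G = (\<lambda>x. psi (x / (1 / y)))" by (rule ext) (simp only: G_def)
    ultimately show ?thesis by simp
  qed
  have inv: "filterlim (\<lambda>y. 1 / y) at_top (at_right (0::real))"
    using filterlim_inverse_at_top_right by (simp add: inverse_eq_divide)
  have "((\<lambda>y. H (1 / y)) \<longlongrightarrow> 0) (at_right 0)"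
    by (rule filterlim_compose[OF H inv])
  then show ?thesis
  proof (rule Lim_transform_eventually)
    show "\<forall>\<^sub>F y in at_right 0. H (1 / y) = laplace g y - (a - b * euler_mascheroni + b * complex_of_real (ln (1 / y)))"
      using eventually_at_right_real[OF zero_less_one]
    proof (rule eventually_mono)
      fix y :: real assume "y \<in> {0<..<1}"
      then have y: "y > 0" by simp
      show "H (1 / y) = laplace g y - (a - b * euler_mascheroni + b * complex_of_real (ln (1 / y)))"
        unfolding lap[OF y] H_def dilate_def dirac_def psi0 pf using y
        by (simp add: field_simps)
    qed
  qed
qed

end
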